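(* Let $h,n\geq2$ and $V\leq S_h$. Then $V\times\{id\}$ is a symmetry group with respect to $(h,n)$ if and only if it is an anonymity group with respect to $(h,n)$. In particular, every anonymity group with respect to $(h,n)$ is a symmetry group with respect to $(h,n)$.
   Context: Permutations compose as $(\sigma\tau)(x)=\sigma(\tau(x))$. Let $G=S_h\times S_n$ and $\mathcal{P}=(S_n)^h$ (preference profiles), with $G$ acting by $(p^{(\varphi,\psi)})_i=\psi\,p_{\varphi^{-1}(i)}$. A social preference function (SPF) is any $F:\mathcal{P}\to S_n$. Its symmetry group is $G(F)=\{(\varphi,\psi)\in G: F(p^{(\varphi,\psi)})=\psi F(p)\ \forall p\}$ and its anonymity group is $G_1(F)=G(F)\cap(S_h\times\{id\})$. $U\leq G$ is a symmetry group with respect to $(h,n)$ if $U=G(F)$ for some SPF $F$; $U\leq S_h\times\{id\}$ is an anonymity group with respect to $(h,n)$ if $U=G_1(F)$ for some SPF $F$. *)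

theory Defs
  imports "HOL-Combinatorics.Permutations"
begin

text \<open>Voters are 0..<h, alternatives are 0..<n. S_k is the set of permutations of {..<k}.
  Composition is function composition: (sigma tau)(x) = sigma (tau x).\<close>

definition Sym :: "nat \<Rightarrow> (nat \<Rightarrow> nat) set" where
  "Sym k = {s. s permutes {..<k}}"

definition Gr :: "nat \<Rightarrow> nat \<Rightarrow> ((nat \<Rightarrow> nat) \<times> (nat \<Rightarrow> nat)) set" where
  "Gr h n = Sym h \<times> Sym n"

definition profiles :: "nat \<Rightarrow> nat \<Rightarrow> (nat \<Rightarrow> nat \<Rightarrow> nat) set" where
  "profiles h n = {p. (\<forall>i<h. p i \<in> Sym n) \<and> (\<forall>i\<ge>h. p i = id)}"

definition act :: "nat \<Rightarrow> (nat \<Rightarrow> nat) \<Rightarrow> (nat \<Rightarrow> nat) \<Rightarrow> (nat \<Rightarrow> nat \<Rightarrow> nat) \<Rightarrow> (nat \<Rightarrow> nat \<Rightarrow> nat)" where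
  "act h \<phi> \<psi> p = (\<lambda>i. if i < h then \<psi> \<circ> p (inv \<phi> i) else id)"

text \<open>A social preference function: any map from profiles to S_n (values off profiles irrelevant).\<close>
definition SPF :: "nat \<Rightarrow> nat \<Rightarrow> ((nat \<Rightarrow> nat \<Rightarrow> nat) \<Rightarrow> (nat \<Rightarrow> nat)) \<Rightarrow> bool" where
  "SPF h n F \<longleftrightarrow> (\<forall>p\<in>profiles h n. F p \<in> Sym n)"

definition symgroup :: "nat \<Rightarrow> nat \<Rightarrow> ((nat \<Rightarrow> nat \<Rightarrow> nat) \<Rightarrow> (nat \<Rightarrow> nat)) \<Rightarrow> ((nat \<Rightarrow> nat) \<times> (nat \<Rightarrow> nat)) set" where
  "symgroup h n F = {(\<phi>, \<psi>) \<in> Gr h n. \<forall>p\<in>profiles h n. F (act h \<phi> \<psi> p) = \<psi> \<circ> F p}"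

definition anongroup :: "nat \<Rightarrow> nat \<Rightarrow> ((nat \<Rightarrow> nat \<Rightarrow> nat) \<Rightarrow> (nat \<Rightarrow> nat)) \<Rightarrow> ((nat \<Rightarrow> nat) \<times> (nat \<Rightarrow> nat)) set" where
  "anongroup h n F = symgroup h n F \<inter> (Sym h \<times> {id})"

definition is_symmetry_group :: "nat \<Rightarrow> nat \<Rightarrow> ((nat \<Rightarrow> nat) \<times> (nat \<Rightarrow> nat)) set \<Rightarrow> bool" where
  "is_symmetry_group h n U \<longleftrightarrow> (\<exists>F. SPF h n F \<and> U = symgroup h n F)"

definition is_anonymity_group :: "nat \<Rightarrow> nat \<Rightarrow> ((nat \<Rightarrow> nat) \<times> (nat \<Rightarrow> nat)) set \<Rightarrow> bool" where
  "is_anonymity_group h n U \<longleftrightarrow> (\<exists>F. SPF h n F \<and> U = anongroup h n F)"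

definition perm_subgroup :: "nat \<Rightarrow> (nat \<Rightarrow> nat) set \<Rightarrow> bool" where
  "perm_subgroup h V \<longleftrightarrow> V \<subseteq> Sym h \<and> id \<in> V \<and>
     (\<forall>a\<in>V. \<forall>b\<in>V. a \<circ> b \<in> V) \<and> (\<forall>a\<in>V. inv a \<in> V)"

end

theory Submission
  imports Defs
begin

definition unan :: "nat \<Rightarrow> (nat \<Rightarrow> nat \<Rightarrow> nat) \<Rightarrow> bool" where
  "unan h p \<longleftrightarrow> (\<forall>i<h. \<forall>j<h. p i = p j)"

definition Fmod :: "nat \<Rightarrow> ((nat \<Rightarrow> nat \<Rightarrow> nat) \<Rightarrow> (nat \<Rightarrow> nat)) \<Rightarrow> (nat \<Rightarrow> nat \<Rightarrow> nat) \<Rightarrow> (nat \<Rightarrow> nat)" where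
  "Fmod h F p = (if unan h p then id else F p)"

lemma inv_lt:
  assumes "\<phi> permutes {..<h}" "i < h" shows "inv \<phi> i < h"
  using permutes_in_image[OF permutes_inv[OF assms(1)]] assms(2) by auto

lemma unan_act:
  assumes "\<phi> permutes {..<h}" "\<psi> permutes {..<n}"
  shows "unan h (act h \<phi> \<psi> p) \<longleftrightarrow> unan h p"
proof
  assume u: "unan h (act h \<phi> \<psi> p)"
  show "unan h p" unfolding unan_def
  proof (intro allI impI)
    fix i j assume ij: "i < h" "j < h"
    have "\<phi> i < h" "\<phi> j < h" using ij permutes_in_image[OF assms(1)] by auto
    then have "act h \<phi> \<psi> p (\<phi> i) = act h \<phi> \<psi> p (\<phi> j)"
      using u unfolding unan_def by blast
    then have "\<psi> \<circ> p (inv \<phi> (\<phi> i)) = \<psi> \<circ> p (inv \<phi> (\<phi> j))"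
      using \<open>\<phi> i < h\<close> \<open>\<phi> j < h\<close> unfolding act_def by simp
    moreover have "inv \<phi> (\<phi> i) = i" "inv \<phi> (\<phi> j) = j"
      using permutes_inverses(2)[OF assms(1)] by simp_all
    ultimately have "\<psi> \<circ> p i = \<psi> \<circ> p j" by simp
    moreover have "inj \<psi>" using assms(2) permutes_inj by blast
    ultimately show "p i = p j"
    proof -
      assume e: "\<psi> \<circ> p i = \<psi> \<circ> p j" and ij: "inj \<psi>"
      show ?thesis
      proof
        fix x have "\<psi> (p i x) = \<psi> (p j x)" using fun_cong[OF e, of x] by simp
        then show "p i x = p j x" using ij by (simp add: inj_eq)
      qed
    qed
  qed
next
  assume u: "unan h p"
  show "unan h (act h \<phi> \<psi> p)" unfolding unan_def
  proof (intro allI impI)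
    fix i j assume ij: "i < h" "j < h"
    have "inv \<phi> i < h" "inv \<phi> j < h" using inv_lt[OF assms(1)] ij by blast+
    then have "p (inv \<phi> i) = p (inv \<phi> j)" using u unfolding unan_def by blast
    then show "act h \<phi> \<psi> p i = act h \<phi> \<psi> p j" using ij by (simp add: act_def)
  qed
qed

lemma act_unan_id:
  assumes "\<phi> permutes {..<h}" "p \<in> profiles h n" "unan h p"
  shows "act h \<phi> id p = p"
proof
  fix i show "act h \<phi> id p i = p i"
  proof (cases "i < h")
    case True
    then have "inv \<phi> i < h" using inv_lt[OF assms(1)] by blast
    then have "p (inv \<phi> i) = p i" using assms(3) True unfolding unan_def by blast
    then show ?thesis using True by (simp add: act_def)
  next
    case False
    then have "p i = id" using assms(2) unfolding profiles_def by simp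
    then show ?thesis using False by (simp add: act_def)
  qed
qed

lemma key:
  assumes "SPF h n F" "h > 0"
  shows "SPF h n (Fmod h F)" "symgroup h n (Fmod h F) = anongroup h n F"
proof -
  have idS: "id \<in> Sym n" unfolding Sym_def by (simp add: permutes_id)
  show "SPF h n (Fmod h F)" using assms idS unfolding SPF_def Fmod_def by auto
  show "symgroup h n (Fmod h F) = anongroup h n F"
  proof
    show "symgroup h n (Fmod h F) \<subseteq> anongroup h n F"
    proof
      fix x assume x: "x \<in> symgroup h n (Fmod h F)"
      obtain \<phi> \<psi> where xe: "x = (\<phi>, \<psi>)" by fastforce
      have ph: "\<phi> permutes {..<h}" and ps: "\<psi> permutes {..<n}"
        using x xe unfolding symgroup_def Gr_def Sym_def by auto
      have eq: "\<And>p. p \<in> profiles h n \<Longrightarrow> Fmod h F (act h \<phi> \<psi> p) = \<psi> \<circ> Fmod h F p"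
        using x xe unfolding symgroup_def by auto
      define q :: "nat \<Rightarrow> nat \<Rightarrow> nat" where "q = (\<lambda>i. id)"
      have qp: "q \<in> profiles h n" using idS unfolding q_def profiles_def by auto
      have uq: "unan h q" unfolding q_def unan_def by auto
      have "Fmod h F (act h \<phi> \<psi> q) = id"
        using unan_act[OF ph ps] uq unfolding Fmod_def by simp
      moreover have "\<psi> \<circ> Fmod h F q = \<psi>" using uq unfolding Fmod_def by simp
      ultimately have psid: "\<psi> = id" using eq[OF qp] by simp
      have "\<forall>p\<in>profiles h n. F (act h \<phi> id p) = id \<circ> F p"
      proof
        fix p assume pp: "p \<in> profiles h n"
        show "F (act h \<phi> id p) = id \<circ> F p"
        proof (cases "unan h p")
          case True then show ?thesis using act_unan_id[OF ph pp] by simp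
        next
          case False
          then have "\<not> unan h (act h \<phi> id p)" using unan_act[OF ph permutes_id] by simp
          then show ?thesis using eq[OF pp] False psid unfolding Fmod_def by simp
        qed
      qed
      then show "x \<in> anongroup h n F" using x xe psid ph
        unfolding anongroup_def symgroup_def Gr_def Sym_def by auto
    qed
  next
    show "anongroup h n F \<subseteq> symgroup h n (Fmod h F)"
    proof
      fix x assume x: "x \<in> anongroup h n F"
      obtain \<phi> \<psi> where xe: "x = (\<phi>, \<psi>)" by fastforce
      have ph: "\<phi> permutes {..<h}" and psid: "\<psi> = id"
        using x xe unfolding anongroup_def symgroup_def Gr_def Sym_def by auto
      have eq: "\<And>p. p \<in> profiles h n \<Longrightarrow> F (act h \<phi> id p) = F p"
        using x xe psid unfolding anongroup_def symgroup_def by auto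
      have "\<forall>p\<in>profiles h n. Fmod h F (act h \<phi> id p) = id \<circ> Fmod h F p"
        using eq unan_act[OF ph permutes_id] unfolding Fmod_def by auto
      then show "x \<in> symgroup h n (Fmod h F)" using x xe psid
        unfolding anongroup_def symgroup_def by auto
    qed
  qed
qed

lemma anon_sym:
  assumes "h > 0" "is_anonymity_group h n U" shows "is_symmetry_group h n U"
proof -
  obtain F where F: "SPF h n F" "U = anongroup h n F"
    using assms(2) unfolding is_anonymity_group_def by blast
  show ?thesis unfolding is_symmetry_group_def
    using key[OF F(1) assms(1)] F(2) by blast
qed

theorem mainTheorem6:
  fixes h n :: nat and V :: "(nat \<Rightarrow> nat) set"
  assumes "h \<ge> 2" and "n \<ge> 2" and "perm_subgroup h V"
  shows "(is_symmetry_group h n (V \<times> {id}) \<longleftrightarrow> is_anonymity_group h n (V \<times> {id}))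
    \<and> (\<forall>U. is_anonymity_group h n U \<longrightarrow> is_symmetry_group h n U)"
proof -
  have h0: "h > 0" using assms(1) by simp
  have VS: "V \<subseteq> Sym h" using assms(3) unfolding perm_subgroup_def by blast
  have "is_symmetry_group h n (V \<times> {id}) \<Longrightarrow> is_anonymity_group h n (V \<times> {id})"
  proof -
    assume "is_symmetry_group h n (V \<times> {id})"
    then obtain F where F: "SPF h n F" "V \<times> {id} = symgroup h n F"
      unfolding is_symmetry_group_def by blast
    then have "anongroup h n F = V \<times> {id}" using VS unfolding anongroup_def by auto
    then show ?thesis using F(1) unfolding is_anonymity_group_def by blast
  qed
  then show ?thesis using anon_sym[OF h0] by blast
qed

end
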